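(* If a topological space $X$ has a $\mathfrak{G}$-base at a point $x\in X$, then $X$ has a countable $cs^{\ast}$-network at $x$ (i.e. $X$ has countable $cs^{\ast}$-character at $x$). *)

theory Defs
  imports Complex_Main "HOL-Library.Countable_Set"
begin

definition nhd_of :: "'a::topological_space set \<Rightarrow> 'a \<Rightarrow> bool" where
  "nhd_of U x \<longleftrightarrow> (\<exists>V. open V \<and> x \<in> V \<and> V \<subseteq> U)"

definition G_base_at :: "((nat \<Rightarrow> nat) \<Rightarrow> 'a::topological_space set) \<Rightarrow> 'a \<Rightarrow> bool" where
  "G_base_at U x \<longleftrightarrow>
     (\<forall>\<alpha>. nhd_of (U \<alpha>) x) \<and>
     (\<forall>W. nhd_of W x \<longrightarrow> (\<exists>\<alpha>. U \<alpha> \<subseteq> W)) \<and>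
     (\<forall>\<alpha> \<beta>. (\<forall>n. \<alpha> n \<le> \<beta> n) \<longrightarrow> U \<beta> \<subseteq> U \<alpha>)"

definition has_G_base_at :: "'a::topological_space \<Rightarrow> bool" where
  "has_G_base_at x \<longleftrightarrow> (\<exists>U. G_base_at U x)"

definition cs_star_network_at :: "'a::topological_space set set \<Rightarrow> 'a \<Rightarrow> bool" where
  "cs_star_network_at \<N> x \<longleftrightarrow>
     (\<forall>s W. s \<longlonglongrightarrow> x \<longrightarrow> nhd_of W x \<longrightarrow>
        (\<exists>N\<in>\<N>. x \<in> N \<and> N \<subseteq> W \<and> infinite {n. s n \<in> N}))"

end

theory Submission
  imports Defs
begin

theorem proposition4p7:
  fixes x :: "'a::topological_space"
  assumes "has_G_base_at x"
  shows "\<exists>\<N>. countable \<N> \<and> cs_star_network_at \<N> x"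
proof -
  obtain U where G: "G_base_at U x" using assms unfolding has_G_base_at_def by blast
  have nh: "\<And>a. nhd_of (U a) x" and base: "\<And>W. nhd_of W x \<Longrightarrow> \<exists>a. U a \<subseteq> W"
    and mono: "\<And>a b. (\<forall>n. a n \<le> b n) \<Longrightarrow> U b \<subseteq> U a"
    using G unfolding G_base_at_def by blast+
  have xin: "\<And>a. x \<in> U a" using nh unfolding nhd_of_def by blast
  define Dl where "Dl l = \<Inter>{U b | b. \<forall>i<length l. b i = l!i}" for l :: "nat list"
  have "countable (range Dl)" by simp
  moreover have "cs_star_network_at (range Dl) x"
    unfolding cs_star_network_at_def
  proof (intro allI impI)
    fix s W assume lim: "s \<longlonglongrightarrow> x" and W: "nhd_of W x"
    obtain a where aW: "U a \<subseteq> W" using base[OF W] by blast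
    define D where "D n = Dl (map a [0..<n])" for n
    have xD: "x \<in> D n" for n unfolding D_def Dl_def using xin by blast
    have DW: "D n \<subseteq> W" for n
    proof -
      have "U a \<in> {U b | b. \<forall>i<length (map a [0..<n]). b i = (map a [0..<n])!i}" by auto
      then show ?thesis unfolding D_def Dl_def using aW by blast
    qed
    show "\<exists>N\<in>range Dl. x \<in> N \<and> N \<subseteq> W \<and> infinite {n. s n \<in> N}"
    proof (rule ccontr)
      assume "\<not> ?thesis"
      hence fin: "finite {m. s m \<in> D n}" for n using xD DW unfolding D_def by blast
      have "\<exists>p. fst p \<ge> n \<and> (\<forall>i<n. snd p i = a i) \<and> s (fst p) \<notin> U (snd p)" for n
      proof -
        obtain m where m: "m \<ge> n" "s m \<notin> D n"
        proof -
          have "\<not> {n..} \<subseteq> {m. s m \<in> D n}" using fin[of n] infinite_Ici[of n]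
            using finite_subset by blast
          then show ?thesis using that by auto
        qed
        then obtain b where "\<forall>i<n. b i = a i" "s m \<notin> U b"
          unfolding D_def Dl_def by auto
        then show ?thesis using m by (intro exI[of _ "(m, b)"]) auto
      qed
      then obtain p where p: "\<And>n. fst (p n) \<ge> n \<and> (\<forall>i<n. snd (p n) i = a i) \<and> s (fst (p n)) \<notin> U (snd (p n))"
        by metis
      define g where "g k = a k + (\<Sum>n\<le>k. snd (p n) k)" for k
      have ge: "snd (p n) k \<le> g k" for n k
      proof (cases "k < n")
        case True then show ?thesis using p[of n] unfolding g_def by auto
      next
        case False
        have "snd (p n) k \<le> (\<Sum>n\<le>k. snd (p n) k)"
          by (rule member_le_sum) (use False in auto)
        then show ?thesis unfolding g_def by auto
      qed
      obtain V where V: "open V" "x \<in> V" "V \<subseteq> U g" using nh[of g] unfolding nhd_of_def by blast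
      obtain M where M: "\<forall>m\<ge>M. s m \<in> V" using lim V unfolding lim_explicit by blast
      have "s (fst (p M)) \<in> U g" using M p[of M] V by blast
      moreover have "U g \<subseteq> U (snd (p M))" using mono ge by blast
      ultimately show False using p[of M] by blast
    qed
  qed
  ultimately show ?thesis by blast
qed

end
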